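(* Let $G$ be a finite group acting linearly on a finite-dimensional complex vector space $V$, and fix a norm on $V$. Let $I\subseteq\mathbb{R}$ be an interval and $c:I\to V/\!\!/G=\sigma(V)\subseteq\mathbb{C}^n$ continuous. If $c$ admits a Lipschitz lift $\tilde c:I\to V$ (i.e. $\sigma\circ\tilde c=c$), then every continuous lift $\bar c:I\to V$ of $c$ is Lipschitz.
   Context: $\sigma=(\sigma_1,\dots,\sigma_n)$ where $\sigma_1,\dots,\sigma_n$ are homogeneous generators of the algebra $\mathbb{C}[V]^G$ of $G$-invariant polynomials; $V/\!\!/G$ is identified with $\sigma(V)\subseteq\mathbb{C}^n$. A lift of $c$ is a curve $\bar c$ in $V$ with $\sigma\circ\bar c=c$. *)

theory Defs
  imports "HOL-Analysis.Analysis" "HOL-Algebra.Group"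
begin

inductive cpoly_fun :: "(complex ^ 'n \<Rightarrow> complex) \<Rightarrow> bool" where
  const: "cpoly_fun (\<lambda>x. a)"
| coord: "cpoly_fun (\<lambda>x. x $ i)"
| add: "cpoly_fun f \<Longrightarrow> cpoly_fun g \<Longrightarrow> cpoly_fun (\<lambda>x. f x + g x)"
| mult: "cpoly_fun f \<Longrightarrow> cpoly_fun g \<Longrightarrow> cpoly_fun (\<lambda>x. f x * g x)"

text \<open>Homogeneous of degree d (for polynomial functions over C this is the same as
  being a homogeneous polynomial of degree d).\<close>
definition homogeneous_of_degree :: "nat \<Rightarrow> (complex ^ 'n \<Rightarrow> complex) \<Rightarrow> bool" where
  "homogeneous_of_degree d f \<longleftrightarrow> (\<forall>a x. f (a *s x) = a ^ d * f x)"

definition linear_action :: "('g, 'b) monoid_scheme \<Rightarrow> ('g \<Rightarrow> complex ^ 'n \<Rightarrow> complex ^ 'n) \<Rightarrow> bool" where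
  "linear_action G \<phi> \<longleftrightarrow>
     (\<forall>g\<in>carrier G. (\<forall>x y. \<phi> g (x + y) = \<phi> g x + \<phi> g y) \<and> (\<forall>a x. \<phi> g (a *s x) = a *s \<phi> g x))
   \<and> \<phi> \<one>\<^bsub>G\<^esub> = id
   \<and> (\<forall>g\<in>carrier G. \<forall>h\<in>carrier G. \<phi> (g \<otimes>\<^bsub>G\<^esub> h) = \<phi> g \<circ> \<phi> h)"

definition invariant_fun :: "('g, 'b) monoid_scheme \<Rightarrow> ('g \<Rightarrow> complex ^ 'n \<Rightarrow> complex ^ 'n) \<Rightarrow> (complex ^ 'n \<Rightarrow> complex) \<Rightarrow> bool" where
  "invariant_fun G \<phi> f \<longleftrightarrow> (\<forall>g\<in>carrier G. \<forall>x. f (\<phi> g x) = f x)"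

text \<open>sigma = (sigma_1,...,sigma_m) is a system of homogeneous generators of the algebra
  C[V]^G of invariant polynomials: each sigma_i is an invariant homogeneous polynomial,
  and every invariant polynomial is a polynomial in sigma_1,...,sigma_m.\<close>
definition hilbert_map :: "('g, 'b) monoid_scheme \<Rightarrow> ('g \<Rightarrow> complex ^ 'n \<Rightarrow> complex ^ 'n)
    \<Rightarrow> (complex ^ 'n \<Rightarrow> complex ^ 'm) \<Rightarrow> bool" where
  "hilbert_map G \<phi> \<sigma> \<longleftrightarrow>
     (\<forall>i. cpoly_fun (\<lambda>x. \<sigma> x $ i) \<and> invariant_fun G \<phi> (\<lambda>x. \<sigma> x $ i)
          \<and> (\<exists>d. homogeneous_of_degree d (\<lambda>x. \<sigma> x $ i)))
   \<and> (\<forall>f. cpoly_fun f \<and> invariant_fun G \<phi> f \<longrightarrow>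
          (\<exists>P :: complex ^ 'm \<Rightarrow> complex. cpoly_fun P \<and> (\<forall>x. f x = P (\<sigma> x))))"

definition is_norm :: "(complex ^ 'n \<Rightarrow> real) \<Rightarrow> bool" where
  "is_norm N \<longleftrightarrow> (\<forall>x. N x = 0 \<longleftrightarrow> x = 0)
     \<and> (\<forall>x y. N (x + y) \<le> N x + N y)
     \<and> (\<forall>a x. N (a *s x) = cmod a * N x)"

definition lipschitz_wrt :: "(complex ^ 'n \<Rightarrow> real) \<Rightarrow> real set \<Rightarrow> (real \<Rightarrow> complex ^ 'n) \<Rightarrow> bool" where
  "lipschitz_wrt N I f \<longleftrightarrow> (\<exists>L. \<forall>s\<in>I. \<forall>t\<in>I. N (f s - f t) \<le> L * \<bar>s - t\<bar>)"

end

theory Submission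
  imports Defs
begin

lemma cpoly_sum: "finite S \<Longrightarrow> (\<And>i. i \<in> S \<Longrightarrow> cpoly_fun (f i)) \<Longrightarrow> cpoly_fun (\<lambda>x. \<Sum>i\<in>S. f i x)"
proof (induction S rule: finite_induct)
  case empty then show ?case using cpoly_fun.const[of 0] by simp
next
  case (insert a S) then show ?case using cpoly_fun.add[of "f a" "\<lambda>x. \<Sum>i\<in>S. f i x"] by simp
qed

lemma cpoly_prod: "finite S \<Longrightarrow> (\<And>i. i \<in> S \<Longrightarrow> cpoly_fun (f i)) \<Longrightarrow> cpoly_fun (\<lambda>x. \<Prod>i\<in>S. f i x)"
proof (induction S rule: finite_induct)
  case empty then show ?case using cpoly_fun.const[of 1] by simp
next
  case (insert a S) then show ?case using cpoly_fun.mult[of "f a" "\<lambda>x. \<Prod>i\<in>S. f i x"] by simp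
qed

lemma cpoly_comp: "cpoly_fun f \<Longrightarrow> (\<And>i. cpoly_fun (\<lambda>x. h x $ i)) \<Longrightarrow> cpoly_fun (\<lambda>x. f (h x))"
proof (induction f rule: cpoly_fun.induct)
  case (const a) show ?case by (rule cpoly_fun.const)
next
  case (coord i) then show ?case by simp
next
  case (add f g) then show ?case using cpoly_fun.add by blast
next
  case (mult f g) then show ?case using cpoly_fun.mult by blast
qed

lemma la_add: "linear_action G \<phi> \<Longrightarrow> g \<in> carrier G \<Longrightarrow> \<phi> g (x + y) = \<phi> g x + \<phi> g y"
  by (simp add: linear_action_def)
lemma la_scale: "linear_action G \<phi> \<Longrightarrow> g \<in> carrier G \<Longrightarrow> \<phi> g (a *s x) = a *s \<phi> g x"
  by (simp add: linear_action_def)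

lemma la_sum: assumes "linear_action G \<phi>" "g \<in> carrier G" shows "finite S \<Longrightarrow> \<phi> g (\<Sum>i\<in>S. f i) = (\<Sum>i\<in>S. \<phi> g (f i))"
proof (induction S rule: finite_induct)
  case empty
  have "\<phi> g (0 *s 0) = 0 *s \<phi> g 0" using la_scale[OF assms] .
  then show ?case by simp
next
  case (insert a S) then show ?case by (simp add: la_add[OF assms])
qed

lemma la_expand: "linear_action G \<phi> \<Longrightarrow> g \<in> carrier G \<Longrightarrow>
   \<phi> g x = (\<Sum>j\<in>UNIV. x $ j *s \<phi> g (axis j 1))"
proof -
  assume a: "linear_action G \<phi>" "g \<in> carrier G"
  have "\<phi> g x = \<phi> g (\<Sum>j\<in>UNIV. x $ j *s axis j 1)" by (simp add: basis_expansion)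
  also have "\<dots> = (\<Sum>j\<in>UNIV. \<phi> g (x $ j *s axis j 1))" by (rule la_sum[OF a]) simp
  also have "\<dots> = (\<Sum>j\<in>UNIV. x $ j *s \<phi> g (axis j 1))" using la_scale[OF a] by simp
  finally show ?thesis .
qed

lemma la_diff: "linear_action G \<phi> \<Longrightarrow> g \<in> carrier G \<Longrightarrow> \<phi> g (x - y) = \<phi> g x - \<phi> g y"
  using la_add[of G \<phi> g "x - y" y] by (simp add: algebra_simps)

lemma cpoly_la: "linear_action G \<phi> \<Longrightarrow> g \<in> carrier G \<Longrightarrow> cpoly_fun (\<lambda>x. \<phi> g x $ i)"
proof -
  assume a: "linear_action G \<phi>" "g \<in> carrier G"
  have "(\<lambda>x. \<phi> g x $ i) = (\<lambda>x. \<Sum>j\<in>UNIV. x $ j * \<phi> g (axis j 1) $ i)"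
    by (subst la_expand[OF a]) (simp add: sum_component)
  moreover have "cpoly_fun (\<lambda>x. \<Sum>j\<in>UNIV. x $ j * \<phi> g (axis j 1) $ i)"
    by (rule cpoly_sum) (auto intro: cpoly_fun.intros)
  ultimately show ?thesis by simp
qed


lemma sep_lin: "(a::complex^'n) \<noteq> b \<Longrightarrow> \<exists>l. cpoly_fun l \<and> l a = 0 \<and> l b = 1"
proof -
  assume "a \<noteq> b"
  then obtain i where i: "a $ i \<noteq> b $ i" by (auto simp: vec_eq_iff)
  define l where "l = (\<lambda>x::complex^'n. (x $ i + (- a $ i)) * inverse (b $ i - a $ i))"
  have "cpoly_fun l" unfolding l_def by (intro cpoly_fun.intros)
  moreover have "l a = 0" "l b = 1" using i by (auto simp: l_def field_simps)
  ultimately show ?thesis by blast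
qed

lemma sep_pt: "finite A \<Longrightarrow> (b::complex^'n) \<notin> A \<Longrightarrow> \<exists>q. cpoly_fun q \<and> (\<forall>a\<in>A. q a = 0) \<and> q b = 1"
proof (induction A rule: finite_induct)
  case empty then show ?case using cpoly_fun.const[of 1] by auto
next
  case (insert a A)
  then obtain q where q: "cpoly_fun q" "\<forall>a\<in>A. q a = 0" "q b = 1" by auto
  from insert obtain l where l: "cpoly_fun l" "l a = 0" "l b = 1" using sep_lin[of a b] by auto
  show ?case
    by (rule exI[of _ "\<lambda>x. l x * q x"]) (use q l in \<open>auto intro: cpoly_fun.mult\<close>)
qed

lemma sep_set: "finite B \<Longrightarrow> finite A \<Longrightarrow> A \<inter> B = {} \<Longrightarrow>
   \<exists>r. cpoly_fun r \<and> (\<forall>a\<in>A. r (a::complex^'n) = 0) \<and> (\<forall>b\<in>B. r b = 1)"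
proof (induction B rule: finite_induct)
  case empty then show ?case using cpoly_fun.const[of 0] by auto
next
  case (insert b B)
  then obtain r where r: "cpoly_fun r" "\<forall>a\<in>A. r a = 0" "\<forall>b\<in>B. r b = 1" by auto
  from insert obtain q where q: "cpoly_fun q" "\<forall>a\<in>A. q a = 0" "q b = 1" using sep_pt[of A b] by auto
  have c: "cpoly_fun (\<lambda>x. 1 + (- 1) * ((1 + (- 1) * r x) * (1 + (- 1) * q x)))"
    using r(1) q(1) by (intro cpoly_fun.intros)
  show ?case
    by (rule exI[of _ "\<lambda>x. 1 + (- 1) * ((1 + (- 1) * r x) * (1 + (- 1) * q x))"]) (use c r q in auto)
qed

lemma orbit:
  assumes G: "group G" "finite (carrier G)" and la: "linear_action G \<phi>"
    and h: "hilbert_map G \<phi> \<sigma>" and eq: "\<sigma> x = \<sigma> y"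
  shows "\<exists>g\<in>carrier G. y = \<phi> g x"
proof (rule ccontr)
  assume ny: "\<not> ?thesis"
  interpret group G by (rule G(1))
  have comp: "\<phi> (g \<otimes>\<^bsub>G\<^esub> k) z = \<phi> g (\<phi> k z)" if "g \<in> carrier G" "k \<in> carrier G" for g k z
    using la that unfolding linear_action_def by auto
  have one: "\<phi> \<one>\<^bsub>G\<^esub> z = z" for z using la unfolding linear_action_def by auto
  define A where "A = (\<lambda>g. \<phi> g x) ` carrier G"
  define B where "B = (\<lambda>g. \<phi> g y) ` carrier G"
  have "A \<inter> B = {}"
  proof (rule ccontr)
    assume "A \<inter> B \<noteq> {}"
    then obtain g k where gk: "g \<in> carrier G" "k \<in> carrier G" "\<phi> g x = \<phi> k y"
      unfolding A_def B_def by auto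
    have "\<phi> (inv\<^bsub>G\<^esub> k \<otimes>\<^bsub>G\<^esub> g) x = \<phi> (inv\<^bsub>G\<^esub> k) (\<phi> k y)" using gk by (simp add: comp)
    also have "\<dots> = y" using gk by (simp add: comp[symmetric] one)
    finally show False using ny gk by auto
  qed
  then obtain r where r: "cpoly_fun r" "\<forall>a\<in>A. r a = 0" "\<forall>b\<in>B. r b = 1"
    using sep_set[of B A] G(2) unfolding A_def B_def by auto
  define f where "f = (\<lambda>z. \<Prod>g\<in>carrier G. r (\<phi> g z))"
  have cf: "cpoly_fun f" unfolding f_def
    by (rule cpoly_prod[OF G(2)]) (rule cpoly_comp[OF r(1)], rule cpoly_la[OF la])
  have inv: "invariant_fun G \<phi> f" unfolding invariant_fun_def
  proof (intro ballI allI)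
    fix k z assume k: "k \<in> carrier G"
    have "f (\<phi> k z) = (\<Prod>g\<in>carrier G. r (\<phi> (g \<otimes>\<^bsub>G\<^esub> k) z))" unfolding f_def using k by (simp add: comp)
    also have "\<dots> = f z" unfolding f_def
      by (rule prod.reindex_bij_witness[of _ "\<lambda>g. g \<otimes>\<^bsub>G\<^esub> inv\<^bsub>G\<^esub> k" "\<lambda>g. g \<otimes>\<^bsub>G\<^esub> k"])
         (use k in \<open>auto simp: m_assoc\<close>)
    finally show "f (\<phi> k z) = f z" .
  qed
  obtain P where "\<forall>z. f z = P (\<sigma> z)" using h cf inv unfolding hilbert_map_def by blast
  then have "f x = f y" using eq by simp
  moreover have "f x = 0" unfolding f_def using r(2) G(2) unfolding A_def
    by (intro prod_zero) (auto intro: exI[of _ "\<one>\<^bsub>G\<^esub>"])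
  moreover have "f y = 1" unfolding f_def using r(3) unfolding B_def by (intro prod.neutral) auto
  ultimately show False by simp
qed


context
  fixes N :: "complex ^ 'n \<Rightarrow> real"
  assumes nN: "is_norm N"
begin

lemma N_scale: "N (a *s x) = cmod a * N x" using nN by (simp add: is_norm_def)
lemma N_tri: "N (x + y) \<le> N x + N y" using nN by (simp add: is_norm_def)
lemma N_eq0: "N x = 0 \<longleftrightarrow> x = 0" using nN by (simp add: is_norm_def)
lemma N_minus: "N (- x) = N x"
proof -
  have "- x = (-1) *s x" by (simp add: vec_eq_iff)
  moreover have "N ((-1) *s x) = N x" by (simp only: N_scale) simp
  ultimately show ?thesis by simp
qed
lemma N_nonneg: "0 \<le> N x"
  using N_tri[of x "-x"] N_eq0[of 0] by (simp add: N_minus)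
lemma N_pos: "x \<noteq> 0 \<Longrightarrow> 0 < N x"
  using N_nonneg[of x] N_eq0[of x] by linarith
lemma N_commute: "N (x - y) = N (y - x)"
  using N_minus[of "x - y"] by simp
lemma N_sum: "finite S \<Longrightarrow> N (\<Sum>i\<in>S. f i) \<le> (\<Sum>i\<in>S. N (f i))"
proof (induction S rule: finite_induct)
  case empty then show ?case using N_eq0[of 0] by simp
next
  case (insert a S) then show ?case using N_tri[of "f a" "sum f S"] by simp
qed

lemma N_upper_gen: "N (\<Sum>j\<in>UNIV. x $ j *s w j) \<le> (\<Sum>j\<in>UNIV. N (w j)) * norm x"
proof -
  have "N (\<Sum>j\<in>UNIV. x $ j *s w j) \<le> (\<Sum>j\<in>UNIV. N (x $ j *s w j))" by (rule N_sum) simp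
  also have "\<dots> = (\<Sum>j\<in>UNIV. cmod (x $ j) * N (w j))" by (simp add: N_scale)
  also have "\<dots> \<le> (\<Sum>j\<in>UNIV. norm x * N (w j))"
    by (rule sum_mono) (intro mult_right_mono, use Finite_Cartesian_Product.norm_nth_le N_nonneg in auto)
  finally show ?thesis by (simp add: sum_distrib_left mult.commute)
qed

lemma N_upper: "\<exists>C\<ge>0. \<forall>x. N x \<le> C * norm x"
proof (intro exI conjI allI)
  show "0 \<le> (\<Sum>j\<in>UNIV. N (axis j 1))" by (intro sum_nonneg N_nonneg)
  fix x
  show "N x \<le> (\<Sum>j\<in>UNIV. N (axis j 1)) * norm x"
    using N_upper_gen[of x "\<lambda>j. axis j 1"] by (simp add: basis_expansion)
qed

lemma N_cont: "continuous_on UNIV N"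
proof -
  obtain C where C: "C \<ge> 0" "\<forall>x. N x \<le> C * norm x" using N_upper by blast
  have "\<bar>N x - N y\<bar> \<le> C * norm (x - y)" for x y
  proof -
    have "N x \<le> N y + N (x - y)" using N_tri[of y "x - y"] by simp
    moreover have "N y \<le> N x + N (y - x)" using N_tri[of x "y - x"] by simp
    moreover have "N (x - y) \<le> C * norm (x - y)" using C(2) by blast
    moreover have "N (y - x) = N (x - y)" by (rule N_commute)
    ultimately show ?thesis by (simp add: abs_le_iff)
  qed
  note lip = this
  show ?thesis
    unfolding continuous_on_iff
  proof (intro ballI allI impI)
    fix x :: "complex^'n" and e :: real assume e: "0 < e"
    show "\<exists>d>0. \<forall>x'\<in>UNIV. dist x' x < d \<longrightarrow> dist (N x') (N x) < e"
    proof (intro exI conjI ballI impI)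
      show "0 < e / (C + 1)" using e C(1) by simp
      fix x' assume "dist x' x < e / (C + 1)"
      then have lt: "(C + 1) * norm (x' - x) < e" using C(1) by (simp add: dist_norm field_simps)
      have "dist (N x') (N x) \<le> C * norm (x' - x)" using lip[of x' x] by (simp add: dist_real_def)
      also have "\<dots> \<le> (C + 1) * norm (x' - x)" by (simp add: distrib_right)
      finally show "dist (N x') (N x) < e" using lt by linarith
    qed
  qed
qed

lemma N_lower: "\<exists>c>0. \<forall>x. c * norm x \<le> N x"
proof -
  have cS: "compact (sphere (0::complex^'n) 1)" by simp
  have ne: "sphere (0::complex^'n) 1 \<noteq> {}" by simp
  obtain x0 where x0: "x0 \<in> sphere 0 1" "\<forall>y\<in>sphere 0 1. N x0 \<le> N y"
    using continuous_attains_inf[OF cS ne continuous_on_subset[OF N_cont]] by blast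
  have m: "0 < N x0" using x0(1) by (intro N_pos) auto
  show ?thesis
  proof (intro exI conjI allI)
    fix x
    show "N x0 * norm x \<le> N x"
    proof (cases "x = 0")
      case True then show ?thesis using N_eq0[of 0] by simp
    next
      case False
      define w where "w = complex_of_real (inverse (norm x)) *s x"
      have xw: "x = complex_of_real (norm x) *s w" using False by (simp add: w_def vec_eq_iff)
      have sr: "complex_of_real r *s v = r *\<^sub>R v" for r and v :: "complex^'n"
        by (simp add: vec_eq_iff of_real_def)
      have "w = inverse (norm x) *\<^sub>R x" unfolding w_def by (rule sr)
      then have "norm w = 1" using False by simp
      then have "N x0 \<le> N w" using x0(2) by auto
      moreover have "N x = norm x * N w" by (subst xw) (simp add: N_scale)
      ultimately show ?thesis by (simp add: mult.commute mult_right_mono)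
    qed
  qed (rule m)
qed

end


lemma la_bound:
  assumes nN: "is_norm N" and la: "linear_action G \<phi>" and fin: "finite (carrier G)"
  shows "\<exists>K\<ge>0. \<forall>g\<in>carrier G. \<forall>v. N (\<phi> g v) \<le> K * N v"
proof -
  obtain c where c: "c > 0" "\<forall>x. c * norm x \<le> N x" using N_lower[OF nN] by blast
  define K where "K = (\<Sum>g\<in>carrier G. \<Sum>j\<in>UNIV. N (\<phi> g (axis j 1))) / c"
  have nn: "0 \<le> (\<Sum>j\<in>UNIV. N (\<phi> g (axis j 1)))" for g by (intro sum_nonneg N_nonneg[OF nN])
  show ?thesis
  proof (intro exI conjI ballI allI)
    show "0 \<le> K" unfolding K_def using c nn by (intro divide_nonneg_pos sum_nonneg) (auto simp: N_nonneg[OF nN])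
    fix g v assume g: "g \<in> carrier G"
    have "N (\<phi> g v) \<le> (\<Sum>j\<in>UNIV. N (\<phi> g (axis j 1))) * norm v"
      using N_upper_gen[OF nN, of v "\<lambda>j. \<phi> g (axis j 1)"] la_expand[OF la g, of v] by simp
    also have "\<dots> \<le> (\<Sum>g\<in>carrier G. \<Sum>j\<in>UNIV. N (\<phi> g (axis j 1))) * norm v"
      by (intro mult_right_mono member_le_sum g fin nn) auto
    also have "\<dots> \<le> K * N v"
    proof -
      have "norm v \<le> N v / c" using c by (simp add: field_simps mult.commute)
      moreover have "0 \<le> (\<Sum>g\<in>carrier G. \<Sum>j\<in>UNIV. N (\<phi> g (axis j 1)))"
        using nn by (intro sum_nonneg) (auto simp: N_nonneg[OF nN])
      ultimately have "(\<Sum>g\<in>carrier G. \<Sum>j\<in>UNIV. N (\<phi> g (axis j 1))) * norm v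
          \<le> (\<Sum>g\<in>carrier G. \<Sum>j\<in>UNIV. N (\<phi> g (axis j 1))) * (N v / c)"
        by (rule mult_left_mono)
      then show ?thesis unfolding K_def by simp
    qed
    finally show "N (\<phi> g v) \<le> K * N v" .
  qed
qed

lemma loc_glob:
  fixes F :: "real \<Rightarrow> real \<Rightarrow> real"
  assumes tri: "\<And>a b c. F a c \<le> F a b + F b c"
    and loc: "\<And>u. u \<in> I \<Longrightarrow> \<exists>\<delta>>0. \<forall>v\<in>I. \<bar>v - u\<bar> < \<delta> \<longrightarrow> F u v \<le> M * \<bar>v - u\<bar> \<and> F v u \<le> M * \<bar>v - u\<bar>"
    and I: "is_interval I" and st: "s \<in> I" "t \<in> I" "s \<le> t"
  shows "F s t \<le> M * (t - s)"
proof -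
  have sub: "x \<in> I" if h: "s \<le> x" "x \<le> t" for x
    using mem_is_interval_1_I[OF I st(1) st(2)] h by blast
  have Fss: "F s s \<le> 0" using loc[OF st(1)] st(1) by fastforce
  define S where "S = {u. s \<le> u \<and> u \<le> t \<and> (\<forall>w. s \<le> w \<and> w \<le> u \<longrightarrow> F s w \<le> M * (w - s))}"
  have sS: "s \<in> S" unfolding S_def using st Fss by auto
  have bdd: "bdd_above S" unfolding S_def by (auto intro: bdd_aboveI[of _ t])
  define \<tau> where "\<tau> = Sup S"
  have st\<tau>: "s \<le> \<tau>" "\<tau> \<le> t" unfolding \<tau>_def using sS bdd
    by (auto intro: cSup_upper cSup_least simp: S_def)
  have A: "F s w \<le> M * (w - s)" if h: "s \<le> w" "w < \<tau>" for w
  proof -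
    obtain u where "u \<in> S" "w < u" using h(2) sS unfolding \<tau>_def
      using less_cSup_iff[OF _ bdd] by blast
    then show ?thesis using h unfolding S_def by auto
  qed
  have B: "F s \<tau> \<le> M * (\<tau> - s)"
  proof (cases "\<tau> = s")
    case True then show ?thesis using Fss by simp
  next
    case False
    then have lt: "s < \<tau>" using st\<tau> by simp
    obtain \<delta> where d: "\<delta> > 0" "\<forall>v\<in>I. \<bar>v - \<tau>\<bar> < \<delta> \<longrightarrow> F \<tau> v \<le> M * \<bar>v - \<tau>\<bar> \<and> F v \<tau> \<le> M * \<bar>v - \<tau>\<bar>"
      using loc[of \<tau>] sub st\<tau> by auto
    define w where "w = max s (\<tau> - \<delta>/2)"
    have w: "s \<le> w" "w < \<tau>" "\<bar>w - \<tau>\<bar> < \<delta>" using lt d(1) by (auto simp: w_def)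
    have wI: "w \<in> I" using sub[of w] w st\<tau> by auto
    have Fw: "F w \<tau> \<le> M * \<bar>w - \<tau>\<bar>" using d(2) wI w(3) by blast
    have "F s \<tau> \<le> F s w + F w \<tau>" by (rule tri)
    also have "\<dots> \<le> M * (w - s) + M * \<bar>w - \<tau>\<bar>"
      using A[OF w(1,2)] Fw by (intro add_mono) auto
    also have "\<dots> = M * (\<tau> - s)" using w by (simp add: algebra_simps)
    finally show ?thesis .
  qed
  have \<tau>S: "\<tau> \<in> S" unfolding S_def using st\<tau> A B by (auto simp: le_less)
  show ?thesis
  proof (cases "\<tau> = t")
    case True then show ?thesis using B by simp
  next
    case False
    then have lt: "\<tau> < t" using st\<tau> by simp
    obtain \<delta> where d: "\<delta> > 0" "\<forall>v\<in>I. \<bar>v - \<tau>\<bar> < \<delta> \<longrightarrow> F \<tau> v \<le> M * \<bar>v - \<tau>\<bar> \<and> F v \<tau> \<le> M * \<bar>v - \<tau>\<bar>"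
      using loc[of \<tau>] sub st\<tau> by auto
    define v where "v = min t (\<tau> + \<delta>/2)"
    have v: "\<tau> < v" "v \<le> t" "\<bar>v - \<tau>\<bar> < \<delta>" using lt d(1) by (auto simp: v_def)
    have "v \<in> S" unfolding S_def
    proof (intro CollectI conjI allI impI)
      show "s \<le> v" "v \<le> t" using v st\<tau> by auto
      fix w assume w: "s \<le> w \<and> w \<le> v"
      show "F s w \<le> M * (w - s)"
      proof (cases "w \<le> \<tau>")
        case True then show ?thesis using \<tau>S w unfolding S_def by auto
      next
        case False
        have wI: "w \<in> I" using sub[of w] w v st\<tau> by auto
        have "\<bar>w - \<tau>\<bar> < \<delta>" using w v False by auto
        then have Fw: "F \<tau> w \<le> M * \<bar>w - \<tau>\<bar>" using d(2) wI by blast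
        have "F s w \<le> F s \<tau> + F \<tau> w" by (rule tri)
        also have "\<dots> \<le> M * (\<tau> - s) + M * \<bar>w - \<tau>\<bar>"
          using B Fw by (intro add_mono) auto
        also have "\<dots> = M * (w - s)" using False by (simp add: algebra_simps)
        finally show ?thesis .
      qed
    qed
    then have "v \<le> \<tau>" unfolding \<tau>_def using bdd by (rule cSup_upper)
    then show ?thesis using v by simp
  qed
qed


theorem lemma5p3:
  fixes G :: "('g, 'b) monoid_scheme"
    and \<phi> :: "'g \<Rightarrow> complex ^ 'n \<Rightarrow> complex ^ 'n"
    and \<sigma> :: "complex ^ 'n \<Rightarrow> complex ^ 'm"
    and N :: "complex ^ 'n \<Rightarrow> real"
    and I :: "real set"
    and c :: "real \<Rightarrow> complex ^ 'm"
    and c_tilde c_bar :: "real \<Rightarrow> complex ^ 'n"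
  assumes "group G" and "finite (carrier G)"
    and "linear_action G \<phi>"
    and "hilbert_map G \<phi> \<sigma>"
    and "is_norm N"
    and "is_interval I"
    and "continuous_on I c" and "c ` I \<subseteq> range \<sigma>"
    and "\<forall>t\<in>I. \<sigma> (c_tilde t) = c t" and "lipschitz_wrt N I c_tilde"
    and "continuous_on I c_bar" and "\<forall>t\<in>I. \<sigma> (c_bar t) = c t"
  shows "lipschitz_wrt N I c_bar"
proof -
  note G = assms(1,2) and la = assms(3) and h = assms(4) and nN = assms(5)
  obtain Cu where Cu: "Cu \<ge> 0" "\<forall>x. N x \<le> Cu * norm x" using N_upper[OF nN] by blast
  obtain K where K: "K \<ge> 0" "\<forall>g\<in>carrier G. \<forall>v. N (\<phi> g v) \<le> K * N v"
    using la_bound[OF nN la G(2)] by blast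
  obtain L where L: "\<forall>s\<in>I. \<forall>t\<in>I. N (c_tilde s - c_tilde t) \<le> L * \<bar>s - t\<bar>"
    using assms(10) unfolding lipschitz_wrt_def by blast
  define L0 where "L0 = \<bar>L\<bar>"
  have L0: "N (c_tilde s - c_tilde t) \<le> L0 * \<bar>s - t\<bar>" if "s \<in> I" "t \<in> I" for s t
  proof -
    have "L * \<bar>s - t\<bar> \<le> \<bar>L\<bar> * \<bar>s - t\<bar>" by (intro mult_right_mono) auto
    then show ?thesis using L that unfolding L0_def by fastforce
  qed
  have L0nn: "L0 \<ge> 0" unfolding L0_def by simp
  define M where "M = K * L0"
  have Mnn: "M \<ge> 0" unfolding M_def using K L0nn by simp
  have lift: "\<exists>g\<in>carrier G. c_bar t = \<phi> g (c_tilde t)" if "t \<in> I" for t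
    using orbit[OF G la h, of "c_tilde t" "c_bar t"] assms(9,12) that by simp
  define F where "F = (\<lambda>a b. N (c_bar b - c_bar a))"
  have tri: "F a c' \<le> F a b + F b c'" for a b c'
    unfolding F_def using N_tri[OF nN, of "c_bar b - c_bar a" "c_bar c' - c_bar b"] by simp
  have loc: "\<exists>\<delta>>0. \<forall>v\<in>I. \<bar>v - u\<bar> < \<delta> \<longrightarrow> F u v \<le> M * \<bar>v - u\<bar> \<and> F v u \<le> M * \<bar>v - u\<bar>"
    if u: "u \<in> I" for u
  proof -
    define x where "x = c_tilde u"
    obtain g where g: "g \<in> carrier G" "c_bar u = \<phi> g x" using lift[OF u] unfolding x_def by blast
    define D where "D = (\<lambda>(h,k). N (\<phi> h x - \<phi> k x)) ` {p \<in> carrier G \<times> carrier G. \<phi> (fst p) x \<noteq> \<phi> (snd p) x}"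
    define d where "d = Min (insert 1 D)"
    have finD: "finite D" unfolding D_def using G(2) by auto
    have Dpos: "\<forall>e\<in>D. e > 0" unfolding D_def using N_pos[OF nN] by auto
    have dpos: "d > 0" unfolding d_def using finD Dpos by simp
    have dle: "d \<le> N (\<phi> h x - \<phi> k x)" if "h \<in> carrier G" "k \<in> carrier G" "\<phi> h x \<noteq> \<phi> k x" for h k
    proof -
      have "N (\<phi> h x - \<phi> k x) \<in> D" unfolding D_def using that by force
      then show ?thesis unfolding d_def using finD by simp
    qed
    define e where "e = d / (2 * (Cu + 1))"
    have e: "e > 0" using dpos Cu by (simp add: e_def)
    obtain \<delta>1 where d1: "\<delta>1 > 0" "\<forall>v\<in>I. dist v u < \<delta>1 \<longrightarrow> dist (c_bar v) (c_bar u) < e"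
      using assms(11) u e unfolding continuous_on_iff by blast
    define \<delta> where "\<delta> = min \<delta>1 (d / (2 * (M + 1)))"
    have \<delta>: "\<delta> > 0" using d1 dpos Mnn by (simp add: \<delta>_def)
    show ?thesis
    proof (intro exI conjI ballI impI)
      show "\<delta> > 0" by (rule \<delta>)
      fix v assume v: "v \<in> I" "\<bar>v - u\<bar> < \<delta>"
      obtain g' where g': "g' \<in> carrier G" "c_bar v = \<phi> g' (c_tilde v)" using lift[OF v(1)] by blast
      have n1: "N (c_bar v - c_bar u) < d / 2"
      proof -
        have "norm (c_bar v - c_bar u) < e" using d1 v by (simp add: dist_norm \<delta>_def)
        then have "Cu * norm (c_bar v - c_bar u) \<le> Cu * e" using Cu(1) by (simp add: mult_left_mono)
        also have "\<dots> < (Cu + 1) * e" using e by simp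
        also have "\<dots> = d / 2" using Cu(1) by (simp add: e_def field_simps)
        finally have "Cu * norm (c_bar v - c_bar u) < d / 2" .
        moreover have "N (c_bar v - c_bar u) \<le> Cu * norm (c_bar v - c_bar u)" using Cu(2) by blast
        ultimately show ?thesis by linarith
      qed
      have n2: "N (\<phi> g' (c_tilde v - x)) \<le> M * \<bar>v - u\<bar>"
      proof -
        have "N (\<phi> g' (c_tilde v - x)) \<le> K * N (c_tilde v - x)" using K g' by blast
        also have "\<dots> \<le> K * (L0 * \<bar>v - u\<bar>)" using L0[OF v(1) u] K(1) unfolding x_def
          by (simp add: mult_left_mono)
        finally show ?thesis by (simp add: M_def mult.assoc)
      qed
      have n3: "M * \<bar>v - u\<bar> < d / 2"
      proof -
        have "M * \<bar>v - u\<bar> \<le> M * (d / (2 * (M + 1)))"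
          using v(2) Mnn by (intro mult_left_mono) (auto simp: \<delta>_def)
        also have "\<dots> < d / 2" using Mnn dpos by (simp add: field_simps)
        finally show ?thesis .
      qed
      have same: "\<phi> g' x = \<phi> g x"
      proof (rule ccontr)
        assume ne: "\<phi> g' x \<noteq> \<phi> g x"
        have "\<phi> g' x - \<phi> g x = - \<phi> g' (c_tilde v - x) + (c_bar v - c_bar u)"
          using g g' by (simp add: la_diff[OF la])
        then have "N (\<phi> g' x - \<phi> g x) = N (- \<phi> g' (c_tilde v - x) + (c_bar v - c_bar u))" by simp
        also have "\<dots> \<le> N (\<phi> g' (c_tilde v - x)) + N (c_bar v - c_bar u)"
          using N_tri[OF nN, of "- \<phi> g' (c_tilde v - x)" "c_bar v - c_bar u"] N_minus[OF nN, of "\<phi> g' (c_tilde v - x)"] by simp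
        finally have "N (\<phi> g' x - \<phi> g x) \<le> N (\<phi> g' (c_tilde v - x)) + N (c_bar v - c_bar u)" .
        then show False using dle[OF g'(1) g(1) ne] n1 n2 n3 by linarith
      qed
      have eqd: "c_bar v - c_bar u = \<phi> g' (c_tilde v - x)"
        using g g' same by (simp add: la_diff[OF la])
      show "F u v \<le> M * \<bar>v - u\<bar>" unfolding F_def eqd using n2 .
      show "F v u \<le> M * \<bar>v - u\<bar>" unfolding F_def N_commute[OF nN, of "c_bar u"] eqd using n2 .
    qed
  qed
  have main: "N (c_bar s - c_bar t) \<le> M * \<bar>s - t\<bar>" if "s \<in> I" "t \<in> I" for s t
  proof (cases "s \<le> t")
    case True
    have "F s t \<le> M * (t - s)" by (rule loc_glob[OF tri loc assms(6) that True])
    then show ?thesis using True N_commute[OF nN, of "c_bar s" "c_bar t"] unfolding F_def by simp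
  next
    case False
    have "F t s \<le> M * (s - t)" using False by (intro loc_glob[OF tri loc assms(6) that(2,1)]) auto
    then show ?thesis using False unfolding F_def by simp
  qed
  show ?thesis unfolding lipschitz_wrt_def using main by blast
qed

end
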